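(* Assume the setting below. Let $X'\in[\underline X,\overline X]$ be arbitrary, let $\bm w'=\arg\min_{\bm w\in\mathbb{R}^d}P_{X'}(\bm w)$, and let $\bm\alpha'$ be a maximizer of $D_{X'}$ over its feasible set $\mathcal{A}$. Define $$\Delta:=\max_{X''\in[\underline X,\overline X]}P_{X''}(\bm w')-\min_{X''\in[\underline X,\overline X]}D_{X''}(\bm\alpha'),$$ and $\mathcal{W}:=\{\bm w\in\mathbb{R}^d:\|\bm w-\bm w'\|_2\le\sqrt{2\Delta/\lambda}\}$. Then $\mathcal{W}\supseteq\mathcal{W}^*$, where $$\mathcal{W}^*:=\Bigl\{\arg\min_{\bm w\in\mathbb{R}^d}P_{X''}(\bm w)\ :\ X''\in[\underline X,\overline X]\Bigr\}.$$
   Context: Data: an output vector $\bm y=(y_1,\dots,y_n)\in\mathcal{Y}^n$ with $\mathcal{Y}\subseteq\mathbb{R}$, and two matrices $\underline X,\overline X\in\mathbb{R}^{n\times d}$ with $\underline X\le\overline X$ entrywise; $[\underline X,\overline X]$ denotes the set of all $X''\in\mathbb{R}^{n\times d}$ with $\underline{x_{ij}}\le x''_{ij}\le\overline{x_{ij}}$ for all $i,j$. For a matrix $X$, $\bm x_{i\cdot}$ denotes its $i$-th row and $\bm x_{\cdot j}$ its $j$-th column. Loss: $\ell:\mathcal{Y}\times\mathbb{R}\to\mathbb{R}_{\ge0}$, convex in its second argument. Penalty: $\rho:\mathbb{R}^d\to\mathbb{R}_{\ge 0}$, $\lambda$-strongly convex for some $\lambda>0$ (i.e. for all $\bm u,\bm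 v$ and $t\in[0,1]$, $\rho(t\bm u+(1-t)\bm v)\le t\rho(\bm u)+(1-t)\rho(\bm v)-\frac{\lambda}{2}t(1-t)\|\bm u-\bm v\|_2^2$) and decomposable, i.e. $\rho(\bm w)=\sum_{j=1}^d\rho_j(w_j)$ with each $\rho_j:\mathbb{R}\to\mathbb{R}$ convex. Primal objective: $P_X(\bm w):=\frac1n\sum_{i=1}^n\ell(y_i,\bm w^\top\bm x_{i\cdot})+\rho(\bm w)$. Convex conjugates: for $\phi:\mathbb{R}^k\to\mathbb{R}$, $\phi^*(\bm v):=\sup_{\bm u}\{\bm u^\top\bm v-\phi(\bm u)\}$; $\ell^*(y,\cdot)$ denotes the conjugate of $\ell(y,\cdot)$ in the second argument. Dual objective: $D_X(\bm\alpha):=-\frac1n\sum_{i=1}^n\ell^*(y_i,-\alpha_i)-\rho^*(\frac1n X^\top\bm\alpha)$, defined on the feasible set $\mathcal{A}:=\{\bm\alpha\in\mathbb{R}^n:\ell^*(y_i,-\alpha_i)<\infty\ \forall i\}$ (note $\rho^*$ is finite on all of $\mathbb{R}^d$ by strong convexity). Standing assumptions: the minimizers and maximizers referred to exist, and strong duality $\max_{\bm\alpha\in\mathcal{A}}D_X(\bm\alpha)=\min_{\bm w}P_X(\bm w)$ holds for every $X\in[\underline X,\overline X]$. *)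

theory Defs
  imports "HOL-Analysis.Analysis"
begin

definition conj :: "('a::real_inner \<Rightarrow> real) \<Rightarrow> 'a \<Rightarrow> ereal" where
  "conj f v = (SUP u. ereal (inner u v - f u))"

definition strongly_convex :: "real \<Rightarrow> ('a::real_normed_vector \<Rightarrow> real) \<Rightarrow> bool" where
  "strongly_convex lam f \<longleftrightarrow>
     (\<forall>u v t. 0 \<le> t \<and> t \<le> 1 \<longrightarrow>
        f (t *\<^sub>R u + (1 - t) *\<^sub>R v) \<le> t * f u + (1 - t) * f v - lam / 2 * t * (1 - t) * (norm (u - v))\<^sup>2)"

definition mat_box :: "real^'d^'n \<Rightarrow> real^'d^'n \<Rightarrow> (real^'d^'n) set" where
  "mat_box Xl Xu = {X. \<forall>i j. Xl $ i $ j \<le> X $ i $ j \<and> X $ i $ j \<le> Xu $ i $ j}"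

definition primal :: "(real \<Rightarrow> real \<Rightarrow> real) \<Rightarrow> (real^'d \<Rightarrow> real) \<Rightarrow> real^'n
    \<Rightarrow> real^'d^'n \<Rightarrow> real^'d \<Rightarrow> real" where
  "primal l rho y X w = (1 / real CARD('n)) * (\<Sum>i\<in>UNIV. l (y $ i) (inner w (row i X))) + rho w"

definition dual_feasible :: "(real \<Rightarrow> real \<Rightarrow> real) \<Rightarrow> real^'n \<Rightarrow> (real^'n) set" where
  "dual_feasible l y = {alpha. \<forall>i. conj (l (y $ i)) (- alpha $ i) < \<infinity>}"

text \<open>Dual objective D_X(alpha) = -1/n sum_i l*(y_i,-alpha_i) - rho*(X^T alpha / n),
  taken as a real number (it is finite on the feasible set, as rho* is finite everywhere).\<close>
definition dual :: "(real \<Rightarrow> real \<Rightarrow> real) \<Rightarrow> (real^'d \<Rightarrow> real) \<Rightarrow> real^'n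
    \<Rightarrow> real^'d^'n \<Rightarrow> real^'n \<Rightarrow> real" where
  "dual l rho y X alpha =
     - (1 / real CARD('n)) * (\<Sum>i\<in>UNIV. real_of_ereal (conj (l (y $ i)) (- alpha $ i)))
     - real_of_ereal (conj rho ((1 / real CARD('n)) *\<^sub>R (transpose X *v alpha)))"

end

theory Submission
  imports Defs
begin

lemma loss_convex_ineq:
  fixes l :: "real \<Rightarrow> real \<Rightarrow> real" and y :: "real^'n" and X :: "real^'d^'n"
  assumes cv: "\<forall>i. convex_on UNIV (l (y $ i))" and t0: "0 \<le> t" and t1: "t \<le> 1"
  shows "(\<Sum>i\<in>UNIV. l (y $ i) (inner (t *\<^sub>R u + (1 - t) *\<^sub>R v) (row i X)))
     \<le> t * (\<Sum>i\<in>UNIV. l (y $ i) (inner u (row i X))) + (1 - t) * (\<Sum>i\<in>UNIV. l (y $ i) (inner v (row i X)))"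
proof -
  have "\<And>i. l (y $ i) (inner (t *\<^sub>R u + (1 - t) *\<^sub>R v) (row i X))
      \<le> t * l (y $ i) (inner u (row i X)) + (1 - t) * l (y $ i) (inner v (row i X))"
  proof -
    fix i
    have e: "inner (t *\<^sub>R u + (1 - t) *\<^sub>R v) (row i X) = (1 - (1 - t)) *\<^sub>R inner v (row i X) + (1 - t) *\<^sub>R inner u (row i X) - (1 - (1-t)) *\<^sub>R inner v (row i X) + t *\<^sub>R inner u (row i X) - (1 - t) *\<^sub>R inner u (row i X) + (1 - t) *\<^sub>R inner v (row i X)"
      by (simp add: inner_add_left algebra_simps)
    have e2: "inner (t *\<^sub>R u + (1 - t) *\<^sub>R v) (row i X) = (1 - t) *\<^sub>R inner v (row i X) + t *\<^sub>R inner u (row i X)"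
      by (simp add: inner_add_left algebra_simps)
    have "l (y $ i) ((1 - t) *\<^sub>R inner v (row i X) + t *\<^sub>R inner u (row i X))
       \<le> (1 - t) * l (y $ i) (inner v (row i X)) + t * l (y $ i) (inner u (row i X))"
      using convex_onD[OF cv[rule_format, of i], of t] t0 t1 by simp
    then show "l (y $ i) (inner (t *\<^sub>R u + (1 - t) *\<^sub>R v) (row i X))
      \<le> t * l (y $ i) (inner u (row i X)) + (1 - t) * l (y $ i) (inner v (row i X))"
      using e2 by simp
  qed
  then have "(\<Sum>i\<in>UNIV. l (y $ i) (inner (t *\<^sub>R u + (1 - t) *\<^sub>R v) (row i X)))
      \<le> (\<Sum>i\<in>UNIV. t * l (y $ i) (inner u (row i X)) + (1 - t) * l (y $ i) (inner v (row i X)))"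
    by (rule sum_mono)
  also have "\<dots> = t * (\<Sum>i\<in>UNIV. l (y $ i) (inner u (row i X))) + (1 - t) * (\<Sum>i\<in>UNIV. l (y $ i) (inner v (row i X)))"
    by (simp add: sum.distrib sum_distrib_left)
  finally show ?thesis .
qed

lemma primal_sc:
  fixes l :: "real \<Rightarrow> real \<Rightarrow> real" and y :: "real^'n" and X :: "real^'d^'n"
  assumes cv: "\<forall>i. convex_on UNIV (l (y $ i))" and sc: "strongly_convex lam rho"
    and t0: "0 \<le> t" and t1: "t \<le> 1"
  shows "primal l rho y X (t *\<^sub>R u + (1 - t) *\<^sub>R v) \<le> t * primal l rho y X u + (1 - t) * primal l rho y X v
           - lam / 2 * t * (1 - t) * (norm (u - v))\<^sup>2"
proof -
  define c where "c = 1 / real CARD('n)"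
  have c0: "c \<ge> 0" unfolding c_def by simp
  have A: "c * (\<Sum>i\<in>UNIV. l (y $ i) (inner (t *\<^sub>R u + (1 - t) *\<^sub>R v) (row i X)))
     \<le> c * (t * (\<Sum>i\<in>UNIV. l (y $ i) (inner u (row i X))) + (1 - t) * (\<Sum>i\<in>UNIV. l (y $ i) (inner v (row i X))))"
    using mult_left_mono[OF loss_convex_ineq[OF cv t0 t1, of u v X] c0] .
  have B: "rho (t *\<^sub>R u + (1 - t) *\<^sub>R v) \<le> t * rho u + (1 - t) * rho v - lam / 2 * t * (1 - t) * (norm (u - v))\<^sup>2"
    using sc t0 t1 unfolding strongly_convex_def by blast
  show ?thesis unfolding primal_def c_def[symmetric] using A B by (simp add: algebra_simps)
qed

lemma sc_min_gap:
  fixes f :: "'a::real_normed_vector \<Rightarrow> real"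
  assumes sc: "\<And>t u v. 0 \<le> t \<Longrightarrow> t \<le> 1 \<Longrightarrow> f (t *\<^sub>R u + (1 - t) *\<^sub>R v) \<le> t * f u + (1 - t) * f v - lam / 2 * t * (1 - t) * (norm (u - v))\<^sup>2"
    and lam: "lam > 0" and mn: "\<forall>v. f w \<le> f v"
  shows "lam / 2 * (norm (u - w))\<^sup>2 \<le> f u - f w"
proof (rule ccontr)
  define c where "c = lam / 2 * (norm (u - w))\<^sup>2"
  define D where "D = f u - f w"
  assume "\<not> ?thesis"
  hence lt: "D < c" unfolding c_def D_def by simp
  have D0: "D \<ge> 0" using mn unfolding D_def by auto
  have c0: "c > 0" using lt D0 by simp
  define t where "t = (c - D) / (2 * c)"
  have t0: "0 < t" using lt c0 unfolding t_def by simp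
  have t1: "t \<le> 1" using D0 c0 unfolding t_def by (simp add: field_simps)
  have "f w \<le> f (t *\<^sub>R u + (1 - t) *\<^sub>R w)" using mn by blast
  also have "\<dots> \<le> t * f u + (1 - t) * f w - t * (1 - t) * c"
    using sc[OF less_imp_le[OF t0] t1, of u w] unfolding c_def by (simp add: algebra_simps)
  finally have "t * (1 - t) * c \<le> t * D" unfolding D_def by (simp add: algebra_simps)
  hence "(1 - t) * c \<le> D" using t0 by (simp add: mult.assoc)
  moreover have "(1 - t) * c = (c + D) / 2" unfolding t_def using c0 by (simp add: field_simps)
  ultimately show False using lt by simp
qed

theorem theorem1:
  fixes Y :: "real set"
    and y :: "real^'n"
    and Xl Xu X' :: "real^'d^'n"
    and l :: "real \<Rightarrow> real \<Rightarrow> real"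
    and rho :: "real^'d \<Rightarrow> real"
    and lam :: real
    and w' :: "real^'d"
    and alpha' :: "real^'n"
  assumes y_in: "\<forall>i. y $ i \<in> Y"
    and box_ok: "\<forall>i j. Xl $ i $ j \<le> Xu $ i $ j"
    and l_nonneg: "\<forall>a\<in>Y. \<forall>z. 0 \<le> l a z"
    and l_convex: "\<forall>a\<in>Y. convex_on UNIV (l a)"
    and rho_nonneg: "\<forall>w. 0 \<le> rho w"
    and lam_pos: "lam > 0"
    and rho_sc: "strongly_convex lam rho"
    and rho_dec: "\<exists>rj :: 'd \<Rightarrow> real \<Rightarrow> real. (\<forall>j. convex_on UNIV (rj j)) \<and>
                    (\<forall>w. rho w = (\<Sum>j\<in>UNIV. rj j (w $ j)))"
    and strong_duality: "\<forall>X\<in>mat_box Xl Xu. \<exists>w alpha.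
            alpha \<in> dual_feasible l y \<and>
            (\<forall>beta\<in>dual_feasible l y. dual l rho y X beta \<le> dual l rho y X alpha) \<and>
            (\<forall>v. primal l rho y X w \<le> primal l rho y X v) \<and>
            dual l rho y X alpha = primal l rho y X w"
    and X'_in: "X' \<in> mat_box Xl Xu"
    and w'_min: "\<forall>v. primal l rho y X' w' \<le> primal l rho y X' v"
    and alpha'_feas: "alpha' \<in> dual_feasible l y"
    and alpha'_max: "\<forall>beta\<in>dual_feasible l y. dual l rho y X' beta \<le> dual l rho y X' alpha'"
    and max_attained: "\<exists>X\<in>mat_box Xl Xu. \<forall>Z\<in>mat_box Xl Xu. primal l rho y Z w' \<le> primal l rho y X w'"
    and min_attained: "\<exists>X\<in>mat_box Xl Xu. \<forall>Z\<in>mat_box Xl Xu. dual l rho y X alpha' \<le> dual l rho y Z alpha'"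
  shows "let Delta = (SUP X\<in>mat_box Xl Xu. primal l rho y X w') - (INF X\<in>mat_box Xl Xu. dual l rho y X alpha');
             W = {w. norm (w - w') \<le> sqrt (2 * Delta / lam)};
             Wstar = {w. \<exists>X\<in>mat_box Xl Xu. \<forall>v. primal l rho y X w \<le> primal l rho y X v}
         in Wstar \<subseteq> W"
proof -
  define Delta where "Delta = (SUP X\<in>mat_box Xl Xu. primal l rho y X w') - (INF X\<in>mat_box Xl Xu. dual l rho y X alpha')"
  have cv: "\<forall>i. convex_on UNIV (l (y $ i))" using y_in l_convex by blast
  have "\<forall>w. (\<exists>X\<in>mat_box Xl Xu. \<forall>v. primal l rho y X w \<le> primal l rho y X v) \<longrightarrow> norm (w - w') \<le> sqrt (2 * Delta / lam)"
  proof (intro allI impI)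
    fix w assume "\<exists>X\<in>mat_box Xl Xu. \<forall>v. primal l rho y X w \<le> primal l rho y X v"
    then obtain X where X: "X \<in> mat_box Xl Xu" and wm: "\<forall>v. primal l rho y X w \<le> primal l rho y X v" by blast
    obtain w2 alpha where al: "alpha \<in> dual_feasible l y"
      and amax: "\<forall>beta\<in>dual_feasible l y. dual l rho y X beta \<le> dual l rho y X alpha"
      and w2m: "\<forall>v. primal l rho y X w2 \<le> primal l rho y X v"
      and sd: "dual l rho y X alpha = primal l rho y X w2"
      using strong_duality X by blast
    have eqw: "primal l rho y X w = primal l rho y X w2" using wm w2m by (meson order_antisym)
    have gap: "lam / 2 * (norm (w' - w))\<^sup>2 \<le> primal l rho y X w' - primal l rho y X w"
      by (rule sc_min_gap[OF _ lam_pos wm]) (rule primal_sc[OF cv rho_sc])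
    have d1: "dual l rho y X alpha' \<le> primal l rho y X w" using amax alpha'_feas sd eqw by simp
    obtain Xa where Xa: "Xa \<in> mat_box Xl Xu" and Xam: "\<forall>Z\<in>mat_box Xl Xu. primal l rho y Z w' \<le> primal l rho y Xa w'"
      using max_attained by blast
    obtain Xb where Xb: "Xb \<in> mat_box Xl Xu" and Xbm: "\<forall>Z\<in>mat_box Xl Xu. dual l rho y Xb alpha' \<le> dual l rho y Z alpha'"
      using min_attained by blast
    have s: "primal l rho y X w' \<le> (SUP X\<in>mat_box Xl Xu. primal l rho y X w')"
      by (rule cSUP_upper[OF X]) (use Xam in \<open>auto simp: bdd_above_def\<close>)
    have i: "(INF X\<in>mat_box Xl Xu. dual l rho y X alpha') \<le> dual l rho y X alpha'"
      by (rule cINF_lower[OF _ X]) (use Xbm in \<open>auto simp: bdd_below_def\<close>)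
    have "lam / 2 * (norm (w' - w))\<^sup>2 \<le> Delta" using gap d1 s i unfolding Delta_def by linarith
    hence "(norm (w - w'))\<^sup>2 \<le> 2 * Delta / lam" using lam_pos by (simp add: field_simps norm_minus_commute)
    thus "norm (w - w') \<le> sqrt (2 * Delta / lam)" by (simp add: real_le_rsqrt)
  qed
  thus ?thesis unfolding Delta_def Let_def by blast
qed

end
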